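(* Let $n\ge2$ be an integer. Then Hypothesis C holds for $\mathbf{GL}_n$: for every quasicharacter $\phi$ of $G=\mathbf{GL}_n(F)$ of positive depth $r$ and every $x\in\mathscr B(\mathbf{GL}_n,F)$, the restriction $\phi|_{G_{x,(r/2)^+}}$ is realized by an element of $\mathfrak z^*_{-r}$.
   Context: $F$ is a nonarchimedean local field of odd residual characteristic, valuation normalized by $v_F(F^\times)=\mathbb Z$, $\mathfrak O_F,\mathfrak P_F$ its integers and maximal ideal, $\psi$ a fixed character of $F$ trivial on $\mathfrak P_F$ and nontrivial on $\mathfrak O_F$. $G_{x,t}$, $\mathfrak g_{x,t}$ are Moy–Prasad subgroups and lattices, $G_{x,t^+}=\bigcup_{s>t}G_{x,s}$, $\mathfrak g^*_{x,t}=\{\lambda\in\mathfrak g^*:\lambda(\mathfrak g_{x,(-t)^+})\subset\mathfrak P_F\}$, $\mathfrak g^*_t=\bigcup_x\mathfrak g^*_{x,t}$; $\mathfrak z^*$ is the dual of the centre of $\mathfrak g$, viewed as the $\mathrm{Ad}^*G$-fixed elements of $\mathfrak g^*$ (the functionals $X\mapsto\beta\operatorname{tr}X$), and $\mathfrak z^*_t=\mathfrak z^*\cap\mathfrak g^*_t$. The depth of a quasicharacter $\phi$ is the least $r\ge0$ with $\phi|_{G_{x,r^+}}=1$ for some (equivalently all) $x$. For $r>0$, $e:\mathfrak g_{x,(r/2)^+}/\mathfrak g_{x,r^+}\to G_{x,(r/2)^+}/G_{x,r^+}$ is Yu's canonical (Moy–Prasad) isomorphism; $\phi|_{G_{x,(r/2)^+}}$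 is realized by $X^*\in\mathfrak g^*$ if $\phi(e(Y+\mathfrak g_{x,r^+}))=\psi(X^*(Y))$ for all $Y\in\mathfrak g_{x,(r/2)^+}$. *)

theory Defs
  imports "HOL-Analysis.Analysis"
begin

definition disc_val :: "('a::field \<Rightarrow> ereal) \<Rightarrow> bool" where
  "disc_val v \<longleftrightarrow>
     (\<forall>x. v x = \<infinity> \<longleftrightarrow> x = 0) \<and>
     (\<forall>x. x \<noteq> 0 \<longrightarrow> (\<exists>k::int. v x = ereal (of_int k))) \<and>
     (\<forall>k::int. \<exists>x. v x = ereal (of_int k)) \<and>
     (\<forall>x y. v (x * y) = v x + v y) \<and>
     (\<forall>x y. min (v x) (v y) \<le> v (x + y))"

text \<open>Nonarchimedean local field: complete discretely valued field with finite residue field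
  O_F / P_F.  Odd residual characteristic: 2 is a unit of O_F, i.e. v 2 = 0.\<close>

definition nonarch_local_field_odd :: "('a::field \<Rightarrow> ereal) \<Rightarrow> bool" where
  "nonarch_local_field_odd v \<longleftrightarrow>
     disc_val v \<and>
     (\<forall>a::nat \<Rightarrow> 'a. (\<forall>k::int. \<exists>N. \<forall>m\<ge>N. \<forall>n\<ge>N. ereal (of_int k) \<le> v (a m - a n)) \<longrightarrow>
        (\<exists>L. \<forall>k::int. \<exists>N. \<forall>m\<ge>N. ereal (of_int k) \<le> v (a m - L))) \<and>
     (\<exists>S. finite S \<and> S \<subseteq> {a. 0 \<le> v a} \<and> (\<forall>a. 0 \<le> v a \<longrightarrow> (\<exists>s\<in>S. 1 \<le> v (a - s)))) \<and>
     v (1 + 1) = 0"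

definition std_add_char :: "('a::field \<Rightarrow> ereal) \<Rightarrow> ('a \<Rightarrow> complex) \<Rightarrow> bool" where
  "std_add_char v \<psi> \<longleftrightarrow>
     (\<forall>a b. \<psi> (a + b) = \<psi> a * \<psi> b) \<and> (\<forall>a. cmod (\<psi> a) = 1) \<and>
     (\<forall>a. 1 \<le> v a \<longrightarrow> \<psi> a = 1) \<and> (\<exists>a. 0 \<le> v a \<and> \<psi> a \<noteq> 1)"

text \<open>Points of the (extended) building of GL_n(F), Goldman--Iwahori: splittable additive norms
  on F^n, i.e. alpha(g c) = min_i (v(c_i) + s_i) for some basis (columns of g) and reals s_i.\<close>

definition building :: "('a::field \<Rightarrow> ereal) \<Rightarrow> ('a^'n::finite \<Rightarrow> ereal) set" where
  "building v = {\<alpha>. \<exists>(g::'a^'n^'n) (s::'n \<Rightarrow> real). invertible g \<and>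
        (\<forall>c. \<alpha> (g *v c) = (MIN i. v (c $ i) + ereal (s i)))}"

definition lie_filt :: "('a::field^'n::finite \<Rightarrow> ereal) \<Rightarrow> real \<Rightarrow> ('a^'n^'n) set" where
  "lie_filt \<alpha> t = {X. \<forall>u. \<alpha> u + ereal t \<le> \<alpha> (X *v u)}"

definition lie_filt_plus :: "('a::field^'n::finite \<Rightarrow> ereal) \<Rightarrow> real \<Rightarrow> ('a^'n^'n) set" where
  "lie_filt_plus \<alpha> t = (\<Union>s\<in>{s. t < s}. lie_filt \<alpha> s)"

definition grp_filt :: "('a::field^'n::finite \<Rightarrow> ereal) \<Rightarrow> real \<Rightarrow> ('a^'n^'n) set" where
  "grp_filt \<alpha> t = {g. invertible g \<and> g - mat 1 \<in> lie_filt \<alpha> t}"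

definition grp_filt_plus :: "('a::field^'n::finite \<Rightarrow> ereal) \<Rightarrow> real \<Rightarrow> ('a^'n^'n) set" where
  "grp_filt_plus \<alpha> t = (\<Union>s\<in>{s. t < s}. grp_filt \<alpha> s)"

text \<open>Quasicharacter of GL_n(F): continuous homomorphism GL_n(F) -> C^x
  (continuity of a homomorphism = continuity at the identity, for the v-adic topology).\<close>

definition quasichar :: "('a::field \<Rightarrow> ereal) \<Rightarrow> ('a^'n::finite^'n \<Rightarrow> complex) \<Rightarrow> bool" where
  "quasichar v \<phi> \<longleftrightarrow>
     (\<forall>g h. invertible g \<and> invertible h \<longrightarrow> \<phi> (g ** h) = \<phi> g * \<phi> h) \<and>
     (\<forall>g. invertible g \<longrightarrow> \<phi> g \<noteq> 0) \<and>
     (\<forall>\<epsilon>>0. \<exists>m::int. \<forall>g. invertible g \<and> (\<forall>i j. ereal (of_int m) \<le> v (g $ i $ j - mat 1 $ i $ j))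
          \<longrightarrow> cmod (\<phi> g - 1) < \<epsilon>)"

definition has_depth :: "('a::field \<Rightarrow> ereal) \<Rightarrow> ('a^'n::finite^'n \<Rightarrow> complex) \<Rightarrow> real \<Rightarrow> bool" where
  "has_depth v \<phi> r \<longleftrightarrow> 0 \<le> r \<and>
     (\<exists>\<alpha>\<in>building v. \<forall>g\<in>grp_filt_plus \<alpha> r. \<phi> g = 1) \<and>
     (\<forall>s. 0 \<le> s \<and> s < r \<longrightarrow> \<not> (\<exists>\<alpha>\<in>building v. \<forall>g\<in>grp_filt_plus \<alpha> s. \<phi> g = 1))"

definition dual_filt :: "('a::field \<Rightarrow> ereal) \<Rightarrow> ('a^'n::finite \<Rightarrow> ereal) \<Rightarrow> real
    \<Rightarrow> ('a^'n^'n \<Rightarrow> 'a) set" where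
  "dual_filt v \<alpha> t = {l. \<forall>Y\<in>lie_filt_plus \<alpha> (- t). 1 \<le> v (l Y)}"

definition dual_depth :: "('a::field \<Rightarrow> ereal) \<Rightarrow> real \<Rightarrow> ('a^'n::finite^'n \<Rightarrow> 'a) set" where
  "dual_depth v t = (\<Union>\<alpha>\<in>building v. dual_filt v \<alpha> t)"

definition centre_dual :: "('a::field^'n::finite^'n \<Rightarrow> 'a) set" where
  "centre_dual = {l. \<exists>\<beta>. l = (\<lambda>X. \<beta> * trace X)}"

text \<open>phi restricted to G_{x,(r/2)+} is realized by lambda: phi(e(Y + g_{x,r+})) = psi(lambda Y),
  where for GL_n the Moy--Prasad isomorphism is e(Y + g_{x,r+}) = (1 + Y) G_{x,r+}.\<close>

definition realizes :: "('a::field \<Rightarrow> complex) \<Rightarrow> ('a^'n::finite^'n \<Rightarrow> complex) \<Rightarrow> ('a^'n \<Rightarrow> ereal)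
    \<Rightarrow> real \<Rightarrow> ('a^'n^'n \<Rightarrow> 'a) \<Rightarrow> bool" where
  "realizes \<psi> \<phi> \<alpha> r l \<longleftrightarrow> (\<forall>Y\<in>lie_filt_plus \<alpha> (r / 2). \<phi> (mat 1 + Y) = \<psi> (l Y))"

end

theory Submission
  imports Defs
begin

locale dval =
  fixes v :: "'a::field \<Rightarrow> ereal"
  assumes dv: "disc_val v"
begin

lemma dvD: "(\<forall>x. v x = \<infinity> \<longleftrightarrow> x = 0)" "(\<forall>x. x \<noteq> 0 \<longrightarrow> (\<exists>k::int. v x = ereal (of_int k)))"
   "(\<forall>k::int. \<exists>x. v x = ereal (of_int k))" "(\<forall>x y. v (x * y) = v x + v y)"
   "(\<forall>x y. min (v x) (v y) \<le> v (x + y))"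
  using dv unfolding disc_val_def by simp_all

lemma v_inf_iff: "v x = \<infinity> \<longleftrightarrow> x = 0"
  using dvD(1) by (rule spec)

lemma v_zero[simp]: "v 0 = \<infinity>" using v_inf_iff by blast

lemma v_mult: "v (x*y) = v x + v y"
  using dvD(4) by simp

lemma v_add: "min (v x) (v y) \<le> v (x+y)"
  using dvD(5) by simp

lemma v_fin: "x \<noteq> 0 \<Longrightarrow> \<exists>k::int. v x = ereal (of_int k)"
  using dvD(2) by simp

lemma v_surj: "\<exists>x. v x = ereal (of_int k)"
  using dvD(3) by simp

lemma v_one[simp]: "v 1 = 0"
proof -
  obtain k::int where k: "v 1 = ereal k" using v_fin[of 1] by auto
  have "v 1 = v 1 + v 1" using v_mult[of 1 1] by simp
  with k have "real_of_int k = k + k" by simp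
  then have "k = 0" by linarith
  with k show ?thesis by (simp add: zero_ereal_def)
qed

lemma v_m1[simp]: "v (-1) = 0"
proof -
  obtain k::int where k: "v (-1) = ereal k" using v_fin[of "-1"] by auto
  have "v 1 = v (-1) + v (-1)" using v_mult[of "-1" "-1"] by simp
  with k have "0 = real_of_int k + k" by (simp add: zero_ereal_def)
  then have "k = 0" by linarith
  with k show ?thesis by (simp add: zero_ereal_def)
qed

lemma v_neg[simp]: "v (-x) = v x"
  using v_mult[of "-1" x] by simp

lemma v_minf: "v x \<noteq> -\<infinity>"
  by (cases "x = 0") (auto dest!: v_fin)

lemma v_diff_sym: "v (x - y) = v (y - x)"
  by (metis minus_diff_eq v_neg)

lemma v_add_ge: "B \<le> v x \<Longrightarrow> B \<le> v y \<Longrightarrow> B \<le> v (x+y)"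
  by (meson min.bounded_iff order_trans v_add)

lemma v_diff_ge: "B \<le> v x \<Longrightarrow> B \<le> v y \<Longrightarrow> B \<le> v (x-y)"
  using v_add_ge[of B x "-y"] by simp

lemma v_sum_ge: "finite A \<Longrightarrow> (\<And>i. i\<in>A \<Longrightarrow> B \<le> v (f i)) \<Longrightarrow> B \<le> v (sum f A)"
  by (induction A rule: finite_induct) (auto intro: v_add_ge)

lemma v_prod_ge: "finite A \<Longrightarrow> (\<And>i. i\<in>A \<Longrightarrow> ereal (c i) \<le> v (f i)) \<Longrightarrow> ereal (sum c A) \<le> v (prod f A)"
proof (induction A rule: finite_induct)
  case empty then show ?case by simp
next
  case (insert a A)
  have "ereal (c a) + ereal (sum c A) \<le> v (f a) + v (prod f A)"
    using insert by (intro add_mono) auto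
  then show ?case using insert by (simp add: v_mult)
qed

lemma v_int_step:
  assumes "ereal t < v x" shows "ereal (of_int (\<lfloor>t\<rfloor> + 1)) \<le> v x"
proof (cases "x = 0")
  case False
  then obtain k::int where k: "v x = ereal k" using v_fin by auto
  with assms have "t < k" by simp
  then have "\<lfloor>t\<rfloor> + 1 \<le> k" by linarith
  with k show ?thesis by simp
qed simp

lemma v_int_ge:
  assumes "ereal t \<le> v x" shows "ereal (of_int (\<lceil>t\<rceil>)) \<le> v x"
proof (cases "x = 0")
  case False
  then obtain k::int where k: "v x = ereal k" using v_fin by auto
  with assms have "t \<le> k" by simp
  then have "\<lceil>t\<rceil> \<le> k" by linarith
  with k show ?thesis by simp
qed simp

lemma v_unit: assumes "0 < v z" shows "v (1+z) = 0"
proof -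
  have a: "0 \<le> v (1+z)" using v_add[of 1 z] assms by simp
  have "min (v (1+z)) (v (-z)) \<le> v (1+z + -z)" by (rule v_add)
  then have "min (v (1+z)) (v z) \<le> 0" by simp
  with assms have "v (1+z) \<le> 0" by (metis leD min_le_iff_disj)
  with a show ?thesis by simp
qed

lemma v_unit_nz: "0 < v z \<Longrightarrow> 1 + z \<noteq> 0"
  using v_unit by fastforce

lemma v_inverse: assumes "x \<noteq> 0" shows "v (inverse x) = - v x"
proof -
  obtain k::int where k: "v x = ereal k" using v_fin assms by auto
  have "v x + v (inverse x) = 0" using v_mult[of x "inverse x"] assms by simp
  moreover obtain j::int where j: "v (inverse x) = ereal j" using v_fin[of "inverse x"] assms by auto
  ultimately have "real_of_int k + j = 0" using k by (simp add: zero_ereal_def)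
  then have "j = - k" by linarith
  then have "v (inverse x) = ereal (- real_of_int k)" using j by simp
  then show ?thesis using k by (simp only: uminus_ereal.simps)
qed

end

context dval begin

definition cng :: "'a \<Rightarrow> 'a \<Rightarrow> bool" where "cng a b \<longleftrightarrow> 1 \<le> v (a - b)"

lemma cng_sym: "cng a b \<Longrightarrow> cng b a"
  unfolding cng_def using v_diff_sym by metis

lemma cng_trans: "cng a b \<Longrightarrow> cng b c \<Longrightarrow> cng a c"
  unfolding cng_def using v_add_ge[of 1 "a-b" "b-c"] by simp

lemma cng_refl: "cng a a" unfolding cng_def by simp

lemma v_pow: "v x = ereal c \<Longrightarrow> v (x ^ n) = ereal (real n * c)"
proof (induction n)
  case 0 then show ?case by (simp add: zero_ereal_def)
next
  case (Suc n)
  then show ?case by (simp add: v_mult algebra_simps)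
qed

end

locale chsetup = dval v for v :: "'a::field \<Rightarrow> ereal" +
  fixes \<psi> :: "'a \<Rightarrow> complex" and S :: "'a set"
  assumes finS: "finite S" and S_O: "\<And>s. s \<in> S \<Longrightarrow> 0 \<le> v s"
    and S_cov: "\<And>a. 0 \<le> v a \<Longrightarrow> \<exists>s\<in>S. 1 \<le> v (a - s)"
    and psi_add: "\<And>a b. \<psi> (a + b) = \<psi> a * \<psi> b"
    and psi_P: "\<And>a. 1 \<le> v a \<Longrightarrow> \<psi> a = 1"
    and psi_nt: "\<exists>a. 0 \<le> v a \<and> \<psi> a \<noteq> 1"
begin

lemma psi0[simp]: "\<psi> 0 = 1" using psi_P[of 0] by simp

lemma psi_neg: "\<psi> (-a) * \<psi> a = 1"
  using psi_add[of "-a" a] by simp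

definition rep :: "'a \<Rightarrow> 'a" where "rep a = (SOME s. s \<in> S \<and> cng a s)"

lemma rep: "0 \<le> v a \<Longrightarrow> rep a \<in> S \<and> cng a (rep a)"
  unfolding rep_def cng_def by (rule someI_ex) (use S_cov in blast)

lemma rep_cong: assumes "cng a b" shows "rep a = rep b"
proof -
  have "(\<lambda>s. s \<in> S \<and> cng a s) = (\<lambda>s. s \<in> S \<and> cng b s)"
    using assms by (auto intro: cng_trans cng_sym)
  then show ?thesis unfolding rep_def by simp
qed

definition T :: "'a set" where "T = rep ` S"

lemma finT: "finite T" unfolding T_def using finS by simp

lemma T_O: "t \<in> T \<Longrightarrow> 0 \<le> v t"
  unfolding T_def using rep S_O by auto

lemma T_rep: "t \<in> T \<Longrightarrow> rep t = t"
  unfolding T_def using rep S_O rep_cong cng_sym by (metis imageE)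

lemma rep_T: "0 \<le> v a \<Longrightarrow> rep a \<in> T"
  unfolding T_def using rep rep_cong by (metis image_eqI)

lemma T_uniq: "t1 \<in> T \<Longrightarrow> t2 \<in> T \<Longrightarrow> cng t1 t2 \<Longrightarrow> t1 = t2"
  using T_rep rep_cong by metis

definition char0 :: "('a \<Rightarrow> complex) \<Rightarrow> bool" where
  "char0 h \<longleftrightarrow> (\<forall>a b. 0 \<le> v a \<longrightarrow> 0 \<le> v b \<longrightarrow> h (a+b) = h a * h b) \<and> (\<forall>a. 1 \<le> v a \<longrightarrow> h a = 1)"

lemma char0_rep: assumes "char0 h" "0 \<le> v a" shows "h (rep a) = h a"
proof -
  have c: "cng a (rep a)" and r: "0 \<le> v (rep a)" using rep S_O assms(2) by auto
  have d: "0 \<le> v (a - rep a)" and d1: "1 \<le> v (a - rep a)" using c unfolding cng_def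
    by (auto intro: order_trans[of 0 1])
  have "h a = h (rep a + (a - rep a))" by simp
  also have "\<dots> = h (rep a) * h (a - rep a)" using assms(1) r d unfolding char0_def by blast
  also have "\<dots> = h (rep a)" using assms(1) d1 unfolding char0_def by simp
  finally show ?thesis by simp
qed

lemma char_sum_zero:
  assumes h: "char0 h" and c0: "0 \<le> v c0" "h c0 \<noteq> 1"
  shows "(\<Sum>t\<in>T. h t) = 0"
proof -
  define \<tau> where "\<tau> t = rep (t + c0)" for t
  have tO: "\<And>t. t \<in> T \<Longrightarrow> 0 \<le> v (t + c0)" using T_O c0 v_add_ge by blast
  have inj: "inj_on \<tau> T"
  proof
    fix x y assume xy: "x \<in> T" "y \<in> T" "\<tau> x = \<tau> y"
    have 1: "cng (x + c0) (\<tau> x)" using rep[OF tO[OF xy(1)]] unfolding \<tau>_def by (rule conjunct2)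
    have 2: "cng (y + c0) (\<tau> y)" using rep[OF tO[OF xy(2)]] unfolding \<tau>_def by (rule conjunct2)
    have "cng (x + c0) (y + c0)" using cng_trans[OF 1 cng_sym[OF 2[folded xy(3)]]] .
    then have "cng x y" unfolding cng_def by simp
    then show "x = y" using T_uniq xy by blast
  qed
  have sub: "\<tau> ` T \<subseteq> T" using rep_T tO unfolding \<tau>_def by auto
  have img: "\<tau> ` T = T" using endo_inj_surj[OF finT sub inj] .
  have "(\<Sum>t\<in>T. h t) = (\<Sum>t\<in>T. h (\<tau> t))"
    using sum.reindex[OF inj, of h] img by simp
  also have "\<dots> = (\<Sum>t\<in>T. h t * h c0)"
  proof (rule sum.cong[OF refl])
    fix t assume t: "t \<in> T"
    have "h (\<tau> t) = h (t + c0)" unfolding \<tau>_def using char0_rep h tO t by blast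
    also have "\<dots> = h t * h c0" using h T_O t c0 unfolding char0_def by blast
    finally show "h (\<tau> t) = h t * h c0" .
  qed
  also have "\<dots> = (\<Sum>t\<in>T. h t) * h c0" by (simp add: sum_distrib_right)
  finally have "(\<Sum>t\<in>T. h t) * (1 - h c0) = 0" by (simp add: algebra_simps)
  with c0 show ?thesis by simp
qed

lemma char0_twist: assumes "char0 h" "0 \<le> v d"
  shows "char0 (\<lambda>c. h c * \<psi> (- (d * c)))"
  unfolding char0_def
proof (intro conjI allI impI)
  fix a b assume "0 \<le> v a" "0 \<le> v b"
  then have "h (a+b) = h a * h b" using assms unfolding char0_def by blast
  moreover have "\<psi> (- (d * (a+b))) = \<psi> (-(d*a)) * \<psi> (-(d*b))"
    using psi_add[of "-(d*a)" "-(d*b)"] by (simp add: algebra_simps)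
  ultimately show "h (a + b) * \<psi> (- (d * (a + b))) = h a * \<psi> (- (d * a)) * (h b * \<psi> (- (d * b)))"
    by simp
next
  fix a assume a: "1 \<le> v a"
  then have "h a = 1" using assms unfolding char0_def by blast
  moreover have "1 \<le> v (- (d * a))"
    using add_mono[OF assms(2) a] by (simp add: v_mult)
  ultimately show "h a * \<psi> (- (d * a)) = 1" using psi_P by simp
qed

lemma psi_char0: assumes "0 \<le> v x" shows "char0 (\<lambda>d. \<psi> (d * x))"
  unfolding char0_def
proof (intro conjI allI impI)
  fix a b show "\<psi> ((a + b) * x) = \<psi> (a * x) * \<psi> (b * x)"
    using psi_add by (simp add: algebra_simps)
next
  fix a assume a: "1 \<le> v a"
  have "1 \<le> v (a * x)" using add_mono[OF a assms] by (simp add: v_mult)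
  then show "\<psi> (a * x) = 1" using psi_P by simp
qed

lemma v_ge0_lt1: assumes "0 \<le> v x" "\<not> 1 \<le> v x" shows "v x = 0"
proof -
  have "x \<noteq> 0" using assms by auto
  then obtain k::int where k: "v x = ereal k" using v_fin by auto
  with assms have "0 \<le> k" "k < 1" by (auto simp: zero_ereal_def one_ereal_def)
  then have "k = 0" by simp
  with k show ?thesis by (simp add: zero_ereal_def)
qed

lemma orth: assumes x: "0 \<le> v x" "\<not> 1 \<le> v x" shows "(\<Sum>d\<in>T. \<psi> (d * x)) = 0"
proof -
  obtain a where a: "0 \<le> v a" "\<psi> a \<noteq> 1" using psi_nt by blast
  have vx: "v x = 0" using v_ge0_lt1 x by blast
  then have xnz: "x \<noteq> 0" by auto
  have "v (a / x) = v a" using vx xnz by (simp add: divide_inverse v_mult v_inverse)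
  then have "0 \<le> v (a / x)" using a by simp
  moreover have "\<psi> (a / x * x) \<noteq> 1" using a xnz by simp
  ultimately show ?thesis using char_sum_zero[OF psi_char0[OF x(1)]] by blast
qed

lemma char0_psi:
  assumes h: "char0 h"
  shows "\<exists>d. 0 \<le> v d \<and> (\<forall>a. 0 \<le> v a \<longrightarrow> h a = \<psi> (d * a))"
proof (rule ccontr)
  assume nex: "\<not> ?thesis"
  have z: "(\<Sum>c\<in>T. h c * \<psi> (- (d * c))) = 0" if d: "d \<in> T" for d
  proof -
    have dO: "0 \<le> v d" using T_O d by blast
    then obtain c where c: "0 \<le> v c" "h c \<noteq> \<psi> (d * c)" using nex by blast
    have "h c * \<psi> (- (d * c)) \<noteq> 1"
    proof
      assume "h c * \<psi> (- (d * c)) = 1"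
      then have "h c * \<psi> (- (d * c)) * \<psi> (d * c) = \<psi> (d * c)" by simp
      then show False using c psi_neg[of "d*c"] by (simp add: mult.assoc)
    qed
    then show ?thesis using char_sum_zero[OF char0_twist[OF h dO] c(1)] by blast
  qed
  define t0 where "t0 = rep 0"
  have t0T: "t0 \<in> T" unfolding t0_def using rep_T by simp
  have t0P: "1 \<le> v t0" using rep[of 0] unfolding t0_def cng_def by simp
  have "0 = (\<Sum>d\<in>T. \<psi> (d * t0) * (\<Sum>c\<in>T. h c * \<psi> (- (d * c))))"
    using z by simp
  also have "\<dots> = (\<Sum>c\<in>T. h c * (\<Sum>d\<in>T. \<psi> (d * (t0 - c))))"
  proof -
    have eq: "\<And>d c. \<psi> (d * t0) * (h c * \<psi> (- (d * c))) = h c * \<psi> (d * (t0 - c))"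
    proof -
      fix d c
      have "\<psi> (d * (t0 - c)) = \<psi> (d*t0) * \<psi> (-(d*c))"
        using psi_add[of "d*t0" "-(d*c)"] by (simp add: right_diff_distrib)
      then show "\<psi> (d * t0) * (h c * \<psi> (- (d * c))) = h c * \<psi> (d * (t0 - c))" by simp
    qed
    then have "(\<Sum>d\<in>T. \<psi> (d * t0) * (\<Sum>c\<in>T. h c * \<psi> (- (d * c)))) = (\<Sum>d\<in>T. \<Sum>c\<in>T. h c * \<psi> (d * (t0 - c)))"
      by (simp only: sum_distrib_left eq)
    also have "\<dots> = (\<Sum>c\<in>T. \<Sum>d\<in>T. h c * \<psi> (d * (t0 - c)))" by (rule sum.swap)
    finally show ?thesis by (simp add: sum_distrib_left)
  qed
  also have "\<dots> = (\<Sum>c\<in>T. if c = t0 then h t0 * of_nat (card T) else 0)"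
  proof (rule sum.cong[OF refl])
    fix c assume c: "c \<in> T"
    show "h c * (\<Sum>d\<in>T. \<psi> (d * (t0 - c))) = (if c = t0 then h t0 * of_nat (card T) else 0)"
    proof (cases "c = t0")
      case False
      have "0 \<le> v (t0 - c)" using T_O c t0T v_diff_ge by blast
      moreover have "\<not> 1 \<le> v (t0 - c)" using T_uniq[OF t0T c] False unfolding cng_def by blast
      ultimately show ?thesis using orth False by simp
    qed simp
  qed
  also have "\<dots> = h t0 * of_nat (card T)" using t0T finT by simp
  finally have "h t0 * of_nat (card T) = 0" by simp
  moreover have "card T \<noteq> 0" using t0T finT by auto
  moreover have "h t0 = 1" using h t0P unfolding char0_def by blast
  ultimately show False by simp
qed


lemma ereal_shift: "ereal (of_int j) \<le> x \<Longrightarrow> x \<noteq> -\<infinity> \<Longrightarrow> ereal c \<le> x + ereal (c - of_int j)"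
  by (cases x) auto

lemma stepC:
  fixes f :: "'a \<Rightarrow> complex" and m k :: int
  assumes m1: "1 \<le> m" and mk: "m \<le> k"
    and fadd: "\<And>a b. ereal (of_int m) \<le> v a \<Longrightarrow> ereal (of_int m) \<le> v b \<Longrightarrow> f (a+b) = f a * f b"
    and ftriv: "\<And>a. ereal (of_int k) \<le> v a \<Longrightarrow> f a = 1"
  shows "\<exists>\<beta>. ereal (of_int (1-k)) \<le> v \<beta> \<and> (\<forall>a. ereal (of_int m) \<le> v a \<longrightarrow> f a = \<psi> (\<beta>*a))"
proof -
  obtain \<pi> where pi: "v \<pi> = ereal (of_int 1)" using v_surj by blast
  have gen: "\<forall>j. m \<le> j \<and> j \<le> k \<and> nat (k - j) = d \<longrightarrow>
     (\<exists>\<beta>. ereal (of_int (1-k)) \<le> v \<beta> \<and> (\<forall>a. ereal (of_int j) \<le> v a \<longrightarrow> f a = \<psi> (\<beta>*a)))" for d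
  proof (induction d)
    case 0
    show ?case
    proof (intro allI impI)
      fix j assume "m \<le> j \<and> j \<le> k \<and> nat (k - j) = 0"
      then have "j = k" by simp
      then show "\<exists>\<beta>. ereal (of_int (1-k)) \<le> v \<beta> \<and> (\<forall>a. ereal (of_int j) \<le> v a \<longrightarrow> f a = \<psi> (\<beta>*a))"
        using ftriv by (intro exI[of _ 0]) simp
    qed
  next
    case (Suc d)
    show ?case
    proof (intro allI impI)
      fix j assume j: "m \<le> j \<and> j \<le> k \<and> nat (k - j) = Suc d"
      then have j1: "m \<le> j+1 \<and> j+1 \<le> k \<and> nat (k - (j+1)) = d" by auto
      then obtain \<beta>1 where b1: "ereal (of_int (1-k)) \<le> v \<beta>1"
        and b1f: "\<And>a. ereal (of_int (j+1)) \<le> v a \<Longrightarrow> f a = \<psi> (\<beta>1*a)"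
        using Suc.IH by blast
      define p where "p = \<pi> ^ nat j"
      have vp: "v p = ereal (of_int j)" unfolding p_def using v_pow[OF pi, of "nat j"] j m1 by simp
      then have pnz: "p \<noteq> 0" by auto
      define h where "h b = f (p*b) * \<psi> (-(\<beta>1*(p*b)))" for b
      have vpb: "v (p*b) = ereal (of_int j) + v b" for b by (simp add: v_mult vp)
      have hc: "char0 h" unfolding char0_def
      proof (intro conjI allI impI)
        fix a b assume ab: "0 \<le> v a" "0 \<le> v b"
        have ma: "ereal (of_int m) \<le> v (p*a)" "ereal (of_int m) \<le> v (p*b)"
          using ab j add_mono[of "ereal (of_int m)" "ereal (of_int j)" 0] unfolding vpb
          by (auto intro: order_trans[OF _ add_left_mono])
        have "f (p*(a+b)) = f (p*a) * f (p*b)"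
          using fadd[OF ma] by (simp add: distrib_left)
        moreover have "\<psi> (-(\<beta>1*(p*(a+b)))) = \<psi> (-(\<beta>1*(p*a))) * \<psi> (-(\<beta>1*(p*b)))"
          using psi_add[of "-(\<beta>1*(p*a))" "-(\<beta>1*(p*b))"] by (simp add: algebra_simps)
        ultimately show "h (a + b) = h a * h b" unfolding h_def by simp
      next
        fix a assume a: "1 \<le> v a"
        have "ereal (of_int (j+1)) \<le> v (p*a)" unfolding vpb using add_left_mono[OF a, of "ereal (of_int j)"]
          by (simp add: one_ereal_def)
        then have "f (p*a) = \<psi> (\<beta>1*(p*a))" using b1f by blast
        then show "h a = 1" unfolding h_def using psi_neg[of "\<beta>1*(p*a)"] by (simp add: mult.commute)
      qed
      obtain \<delta> where d0: "0 \<le> v \<delta>" and dh: "\<And>b. 0 \<le> v b \<Longrightarrow> h b = \<psi> (\<delta> * b)"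
        using char0_psi[OF hc] by blast
      define \<beta> where "\<beta> = \<beta>1 + \<delta> / p"
      have vip: "v (inverse p) = ereal (- of_int j)" using v_inverse[OF pnz] vp by simp
      have jk: "real_of_int (j+1) \<le> real_of_int k" using j1 by (simp only: of_int_le_iff)
      have "ereal (of_int (- j)) \<le> v (\<delta> / p)"
        using add_mono[OF d0 order_refl[of "ereal (of_int (-j))"]] vip by (simp add: divide_inverse v_mult)
      moreover have "ereal (of_int (1-k)) \<le> ereal (of_int (-j))" using jk by simp
      ultimately have "ereal (of_int (1-k)) \<le> v (\<delta> / p)" by (rule order_trans[rotated])
      then have vb: "ereal (of_int (1-k)) \<le> v \<beta>" unfolding \<beta>_def using b1 v_add_ge by blast
      have "f a = \<psi> (\<beta>*a)" if a: "ereal (of_int j) \<le> v a" for a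
      proof -
        define b where "b = a / p"
        have ab: "a = p * b" unfolding b_def using pnz by simp
        have "v b = v a + ereal (- of_int j)" unfolding b_def using vip by (simp add: divide_inverse v_mult)
        then have b0: "0 \<le> v b" using ereal_shift[OF a v_minf, of 0] by (simp add: zero_ereal_def)
        have "f a = h b * \<psi> (\<beta>1*a)"
          unfolding h_def ab using psi_neg[of "\<beta>1*(p*b)"] by (simp add: mult.assoc)
        also have "\<dots> = \<psi> (\<delta> * b + \<beta>1 * a)" using dh[OF b0] psi_add by simp
        also have "\<delta> * b + \<beta>1 * a = \<beta> * a" unfolding \<beta>_def b_def using pnz by (simp add: algebra_simps)
        finally show ?thesis .
      qed
      then show "\<exists>\<beta>. ereal (of_int (1-k)) \<le> v \<beta> \<and> (\<forall>a. ereal (of_int j) \<le> v a \<longrightarrow> f a = \<psi> (\<beta>*a))"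
        using vb by blast
    qed
  qed
  then show ?thesis using mk by blast
qed
end

lemma induct_matrix_row_operations_f:
  fixes P :: "'a::field^'n^'n \<Rightarrow> bool"
  assumes zero_row: "\<And>A i. row i A = 0 \<Longrightarrow> P A"
    and diagonal: "\<And>A. (\<And>i j. i \<noteq> j \<Longrightarrow> A$i$j = 0) \<Longrightarrow> P A"
    and swap_cols: "\<And>A m n. \<lbrakk>P A; m \<noteq> n\<rbrakk> \<Longrightarrow> P(\<chi> i j. A $ i $ Transposition.transpose m n j)"
    and row_op: "\<And>A m n c. \<lbrakk>P A; m \<noteq> n\<rbrakk>
                   \<Longrightarrow> P(\<chi> i. if i = m then row m A + c *s row n A else row i A)"
  shows "P A"
proof -
  have "P A" if "(\<And>i j. \<lbrakk>j \<in> -K;  i \<noteq> j\<rbrakk> \<Longrightarrow> A$i$j = 0)" for A K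
  proof -
    have "finite K"
      by simp
    then show ?thesis using that
    proof (induction arbitrary: A rule: finite_induct)
      case empty
      with diagonal show ?case
        by simp
    next
      case (insert k K)
      note insertK = insert
      have "P A" if kk: "A$k$k \<noteq> 0"
        and 0: "\<And>i j. \<lbrakk>j \<in> - insert k K; i \<noteq> j\<rbrakk> \<Longrightarrow> A$i$j = 0"
               "\<And>i. \<lbrakk>i \<in> -L; i \<noteq> k\<rbrakk> \<Longrightarrow> A$i$k = 0" for A L
      proof -
        have "finite L"
          by simp
        then show ?thesis using 0 kk
        proof (induction arbitrary: A rule: finite_induct)
          case (empty B)
          show ?case
          proof (rule insertK)
            fix i j
            assume "i \<in> - K" "j \<noteq> i"
            show "B $ j $ i = 0"
              using \<open>j \<noteq> i\<close> \<open>i \<in> - K\<close> empty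
              by (metis ComplD ComplI Compl_eq_Diff_UNIV Diff_empty UNIV_I insert_iff)
          qed
        next
          case (insert l L B)
          show ?case
          proof (cases "k = l")
            case True
            with insert show ?thesis
              by auto
          next
            case False
            let ?C = "\<chi> i. if i = l then row l B - (B $ l $ k / B $ k $ k) *s row k B else row i B"
            have 1: "\<lbrakk>j \<in> - insert k K; i \<noteq> j\<rbrakk> \<Longrightarrow> ?C $ i $ j = 0" for j i
              by (auto simp: insert.prems(1) row_def)
            have 2: "?C $ i $ k = 0"
              if "i \<in> - L" "i \<noteq> k" for i
            proof (cases "i=l")
              case True
              with that insert.prems show ?thesis
                by (simp add: row_def)
            next
              case False
              with that show ?thesis
                by (simp add: insert.prems(2) row_def)
            qed
            have 3: "?C $ k $ k \<noteq> 0"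
              by (auto simp: insert.prems row_def \<open>k \<noteq> l\<close>)
            have PC: "P ?C"
              using insert.IH [OF 1 2 3] by auto
            have eqB: "(\<chi> i. if i = l then row l ?C + (B $ l $ k / B $ k $ k) *s row k ?C else row i ?C) = B"
              using \<open>k \<noteq> l\<close> by (simp add: vec_eq_iff row_def)
            show ?thesis
              using row_op [OF PC, of l k, where c = "B$l$k / B$k$k"] eqB \<open>k \<noteq> l\<close>
              by (simp add: cong: if_cong)
          qed
        qed
      qed
      then have nonzero_hyp: "P A"
        if kk: "A$k$k \<noteq> 0" and zeroes: "\<And>i j. j \<in> - insert k K \<and> i\<noteq>j \<Longrightarrow> A$i$j = 0" for A
        by (auto simp: intro!: kk zeroes)
      show ?case
      proof (cases "row k A = 0")
        case True
        with zero_row show ?thesis by auto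
      next
        case False
        then obtain l where l: "A$k$l \<noteq> 0"
          by (auto simp: row_def zero_vec_def vec_eq_iff)
        show ?thesis
        proof (cases "k = l")
          case True
          with l nonzero_hyp insert.prems show ?thesis
            by blast
        next
          case False
          have *: "A $ i $ Transposition.transpose k l j = 0" if "j \<noteq> k" "j \<notin> K" "i \<noteq> j" for i j
            using False l insert.prems that
            by (auto simp add: Transposition.transpose_def)
          have "P (\<chi> i j. (\<chi> i j. A $ i $ Transposition.transpose k l j) $ i $ Transposition.transpose k l j)"
            by (rule swap_cols [OF nonzero_hyp False]) (auto simp: l *)
          moreover
          have "(\<chi> i j. (\<chi> i j. A $ i $ Transposition.transpose k l j) $ i $ Transposition.transpose k l j) = A"
            by simp
          ultimately show ?thesis
            by simp
        qed
      qed
    qed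
  qed
  then show ?thesis
    by blast
qed

lemma induct_matrix_elementary_f:
  fixes P :: "'a::field^'n^'n \<Rightarrow> bool"
  assumes mult: "\<And>A B. \<lbrakk>P A; P B\<rbrakk> \<Longrightarrow> P(A ** B)"
    and zero_row: "\<And>A i. row i A = 0 \<Longrightarrow> P A"
    and diagonal: "\<And>A. (\<And>i j. i \<noteq> j \<Longrightarrow> A$i$j = 0) \<Longrightarrow> P A"
    and swap1: "\<And>m n. m \<noteq> n \<Longrightarrow> P(\<chi> i j. mat 1 $ i $ Transposition.transpose m n j)"
    and idplus: "\<And>m n c. m \<noteq> n \<Longrightarrow> P(\<chi> i j. if i = m \<and> j = n then c else of_bool (i = j))"
  shows "P A"
proof -
  have swap: "P (\<chi> i j. A $ i $ Transposition.transpose m n j)"  (is "P ?C")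
    if "P A" "m \<noteq> n" for A m n
  proof -
    have "A ** (\<chi> i j. mat 1 $ i $ Transposition.transpose m n j) = ?C"
      by (simp add: matrix_matrix_mult_def mat_def vec_eq_iff if_distrib sum.delta_remove)
    then show ?thesis
      using mult swap1 that by metis
  qed
  have row: "P (\<chi> i. if i = m then row m A + c *s row n A else row i A)"  (is "P ?C")
    if "P A" "m \<noteq> n" for A m n c
  proof -
    let ?B = "\<chi> i j. if i = m \<and> j = n then c else of_bool (i = j)"
    have "?B ** A = ?C"
      using \<open>m \<noteq> n\<close> unfolding matrix_matrix_mult_def row_def of_bool_def
      by (auto simp: vec_eq_iff if_distrib [of "\<lambda>x. x * y" for y] sum.remove cong: if_cong)
    then show ?thesis
      by (rule subst) (auto simp: that mult idplus)
  qed
  show ?thesis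
    by (rule induct_matrix_row_operations_f [OF zero_row diagonal swap row])
qed



definition dg :: "'a::field \<Rightarrow> 'n \<Rightarrow> 'a^'n::finite^'n" where
  "dg a k = (\<chi> i j. if i = j then (if i = k then a else 1) else 0)"

definition Em :: "'n::finite \<Rightarrow> 'n \<Rightarrow> 'a::field \<Rightarrow> 'a^'n^'n" where
  "Em m n c = (\<chi> i j. if i = m \<and> j = n then c else of_bool (i = j))"

definition Sw :: "'n::finite \<Rightarrow> 'n \<Rightarrow> 'a::field^'n^'n" where
  "Sw m n = (\<chi> i j. mat 1 $ i $ Transposition.transpose m n j)"

lemma dg_left: "(dg a k ** B) $ i $ j = (if i = k then a else 1) * B$i$j"
proof -
  have "(dg a k ** B) $ i $ j = (\<Sum>l\<in>UNIV. if l = i then (if i = k then a else 1) * B$l$j else 0)"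
    unfolding dg_def matrix_matrix_mult_def vec_lambda_beta by (intro sum.cong) auto
  then show ?thesis by (simp only: sum.delta finite UNIV_I if_True)
qed

lemma dg_right: "(B ** dg a k) $ i $ j = B$i$j * (if j = k then a else 1)"
proof -
  have "(B ** dg a k) $ i $ j = (\<Sum>l\<in>UNIV. if l = j then B$i$l * (if j = k then a else 1) else 0)"
    unfolding dg_def matrix_matrix_mult_def vec_lambda_beta by (intro sum.cong) auto
  then show ?thesis by (simp only: sum.delta finite UNIV_I if_True)
qed

lemma dg_entry: "dg a k $ i $ j = (if i = j then (if i = k then a else 1) else 0)"
  unfolding dg_def by simp

lemma Em_entry: "Em m n c $ i $ j = (if i = m \<and> j = n then c else of_bool (i = j))"
  unfolding Em_def by simp

lemma Sw_entry: "Sw m n $ i $ j = (if i = Transposition.transpose m n j then 1 else 0)"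
  unfolding Sw_def mat_def by simp

lemma Em_left: assumes "m \<noteq> n"
  shows "(Em m n c ** B) $ i $ j = B$i$j + (if i = m then c * B$n$j else 0)"
proof -
  have "(Em m n c ** B) $ i $ j = (\<Sum>k\<in>UNIV. (if i = m \<and> k = n then c else of_bool (i = k)) * B$k$j)"
    unfolding Em_def matrix_matrix_mult_def by simp
  also have "\<dots> = (\<Sum>k\<in>UNIV. (if k = i then B$k$j else 0) + (if k = n then (if i = m then c * B$k$j else 0) else 0))"
    by (rule sum.cong) (use assms in auto)
  also have "\<dots> = B$i$j + (if i = m then c * B$n$j else 0)"
    by (simp only: sum.distrib sum.delta finite UNIV_I if_True)
  finally show ?thesis .
qed

lemma Em_right: assumes "m \<noteq> n"
  shows "(B ** Em m n c) $ i $ j = B$i$j + (if j = n then B$i$m * c else 0)"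
proof -
  have "(B ** Em m n c) $ i $ j = (\<Sum>k\<in>UNIV. B$i$k * (if k = m \<and> j = n then c else of_bool (k = j)))"
    unfolding Em_def matrix_matrix_mult_def by simp
  also have "\<dots> = (\<Sum>k\<in>UNIV. (if k = j then B$i$k else 0) + (if k = m then (if j = n then B$i$k * c else 0) else 0))"
    by (rule sum.cong) (use assms in auto)
  also have "\<dots> = B$i$j + (if j = n then B$i$m * c else 0)"
    by (simp only: sum.distrib sum.delta finite UNIV_I if_True)
  finally show ?thesis .
qed

lemma Sw_left: "(Sw m n ** B) $ i $ j = B $ (Transposition.transpose m n i) $ j"
proof -
  have "(Sw m n ** B) $ i $ j = (\<Sum>k\<in>UNIV. (if k = Transposition.transpose m n i then B$k$j else 0))"
    unfolding Sw_def matrix_matrix_mult_def mat_def vec_lambda_beta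
    by (intro sum.cong) (auto simp: transpose_eq_iff)
  also have "\<dots> = B $ (Transposition.transpose m n i) $ j" by (simp only: sum.delta finite UNIV_I if_True)
  finally show ?thesis .
qed

lemma Sw_right: "(B ** Sw m n) $ i $ j = B $ i $ (Transposition.transpose m n j)"
proof -
  have "(B ** Sw m n) $ i $ j = (\<Sum>k\<in>UNIV. (if k = Transposition.transpose m n j then B$i$k else 0))"
    unfolding Sw_def matrix_matrix_mult_def mat_def vec_lambda_beta
    by (intro sum.cong) (auto simp: transpose_eq_iff)
  also have "\<dots> = B $ i $ (Transposition.transpose m n j)" by (simp only: sum.delta finite UNIV_I if_True)
  finally show ?thesis .
qed

lemma dg_mult: "dg a k ** dg b k = dg (a*b) k"
  by (simp add: vec_eq_iff dg_left dg_entry)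

lemma dg_one: "dg 1 k = mat 1"
  by (simp add: vec_eq_iff dg_entry mat_def)

lemma Em_mult: assumes "m \<noteq> n" shows "Em m n a ** Em m n b = Em m n (a+b)"
  using assms by (auto simp add: vec_eq_iff Em_left[OF assms] Em_entry)

lemma Em_zero: "m \<noteq> n \<Longrightarrow> Em m n 0 = mat 1"
  by (auto simp add: vec_eq_iff Em_entry mat_def)

lemma Sw_Sw: "Sw m n ** Sw m n = mat 1"
  by (auto simp add: vec_eq_iff Sw_left Sw_entry mat_def transpose_eq_iff)

lemma Sw_conj: "Sw m n ** dg a m ** Sw m n = dg a n"
  by (auto simp add: vec_eq_iff Sw_left Sw_right dg_left dg_right Sw_entry dg_entry transpose_eq_iff)

lemma Em_conj: assumes "m \<noteq> n" "(d::'a::field) \<noteq> 0"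
  shows "dg d m ** Em m n c ** dg (inverse d) m = Em m n (d*c)"
  using assms by (auto simp add: vec_eq_iff dg_left dg_right Em_left[OF assms(1)] Em_right[OF assms(1)] dg_entry Em_entry)

lemma Sw_decomp: assumes "m \<noteq> n"
  shows "Sw m n = Em m n 1 ** Em n m (-1) ** Em m n (1::'a::field) ** dg (-1) m"
  using assms by (auto simp add: vec_eq_iff dg_entry dg_right Em_right[OF assms] Em_right[OF assms[symmetric]] Em_entry Sw_entry transpose_eq_iff)

lemma inv_dg: "(a::'a::field) \<noteq> 0 \<Longrightarrow> invertible (dg a k :: 'a^'n::finite^'n)"
  unfolding invertible_def
  by (rule exI[of _ "dg (inverse a) k"]) (simp add: dg_mult dg_one mult.commute)

lemma inv_Em: "m \<noteq> n \<Longrightarrow> invertible (Em m n (c::'a::field) :: 'a^'n::finite^'n)"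
  unfolding invertible_def
  by (rule exI[of _ "Em m n (-c)"]) (simp add: Em_mult Em_zero)

lemma inv_Sw: "invertible (Sw m n :: 'a::field^'n::finite^'n)"
  unfolding invertible_def using Sw_Sw by blast

lemma inv_mat1: "invertible (mat 1 :: 'a::field^'n::finite^'n)"
  unfolding invertible_def by (rule exI[of _ "mat 1"]) simp

lemma det_dg: "det (dg a k :: 'a::field^'n::finite^'n) = a"
proof -
  have "det (dg a k :: 'a^'n^'n) = (\<Prod>i\<in>UNIV. dg a k $ i $ i)"
    by (rule det_diagonal) (simp add: dg_entry)
  also have "\<dots> = (\<Prod>i\<in>UNIV. if i = k then a else 1)" by (simp add: dg_entry)
  also have "\<dots> = a" by (simp add: prod.delta)
  finally show ?thesis .
qed

lemma det_Em: assumes "m \<noteq> n" shows "det (Em m n c :: 'a::field^'n::finite^'n) = 1"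
proof -
  have "(Em m n c :: 'a^'n^'n) = (\<chi> k. if k = m then row m (mat 1) + c *s row n (mat 1) else row k (mat 1))"
    using assms by (auto simp: vec_eq_iff Em_entry row_def mat_def)
  then show ?thesis using det_row_operation[OF assms, of "mat 1" c] by simp
qed

lemma det_Sw: assumes "m \<noteq> n" shows "det (Sw m n :: 'a::field^'n::finite^'n) = -1"
proof -
  have "det (Sw m n :: 'a^'n^'n) = of_int (sign (Transposition.transpose m n)) * det (mat 1 :: 'a^'n^'n)"
    unfolding Sw_def by (rule det_permute_columns) (simp add: permutes_swap_id)
  then show ?thesis using assms by (simp add: sign_swap_id)
qed

lemma induct_matrix_elementary_g:
  fixes P :: "'a::field^'n::finite^'n \<Rightarrow> bool"
  assumes mult: "\<And>A B. \<lbrakk>P A; P B\<rbrakk> \<Longrightarrow> P(A ** B)"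
    and zero_row: "\<And>A i. row i A = 0 \<Longrightarrow> P A"
    and diagonal: "\<And>A. (\<And>i j. i \<noteq> j \<Longrightarrow> A$i$j = 0) \<Longrightarrow> P A"
    and swap1: "\<And>m n. m \<noteq> n \<Longrightarrow> P (Sw m n)"
    and idplus: "\<And>m n c. m \<noteq> n \<Longrightarrow> P (Em m n c)"
  shows "P A"
proof (rule induct_matrix_elementary_f[of P])
  fix m n :: 'n assume "m \<noteq> n"
  then show "P (\<chi> i j. mat 1 $ i $ Transposition.transpose m n j)" using swap1 unfolding Sw_def by blast
next
  fix m n :: 'n and c :: 'a assume "m \<noteq> n"
  then show "P (\<chi> i j. if i = m \<and> j = n then c else of_bool (i = j))" using idplus unfolding Em_def by blast
qed (use assms in blast)+

locale qc =
  fixes \<phi> :: "'a::field^'n::finite^'n \<Rightarrow> complex"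
  assumes phim: "\<And>g h. invertible g \<Longrightarrow> invertible h \<Longrightarrow> \<phi> (g ** h) = \<phi> g * \<phi> h"
    and phinz: "\<And>g. invertible g \<Longrightarrow> \<phi> g \<noteq> 0"
    and two: "(2::'a) \<noteq> 0"
begin

lemma phi1: "\<phi> (mat 1) = 1"
proof -
  have "\<phi> (mat 1) = \<phi> (mat 1) * \<phi> (mat 1)" using phim[OF inv_mat1 inv_mat1] by simp
  then show ?thesis using phinz[OF inv_mat1] by simp
qed

lemma phi_dg_mult: assumes "a \<noteq> 0" "b \<noteq> 0" shows "\<phi> (dg (a*b) k) = \<phi> (dg a k) * \<phi> (dg b k)"
  using phim[OF inv_dg[OF assms(1)] inv_dg[OF assms(2)], of k k] by (simp add: dg_mult)

lemma phi_Em: assumes "m \<noteq> n" shows "\<phi> (Em m n c) = 1"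
proof -
  have i2: "inverse (2::'a) \<noteq> 0" using two by simp
  have "\<phi> (Em m n (2*c)) = \<phi> (dg 2 m ** Em m n c ** dg (inverse 2) m)"
    using Em_conj[OF assms two] by simp
  also have "\<dots> = \<phi> (dg 2 m) * \<phi> (Em m n c) * \<phi> (dg (inverse 2) m)"
    using phim[OF invertible_mult[OF inv_dg[OF two] inv_Em[OF assms]] inv_dg[OF i2]]
      phim[OF inv_dg[OF two] inv_Em[OF assms]] by simp
  also have "\<dots> = \<phi> (Em m n c) * \<phi> (dg (2 * inverse 2) m)"
    unfolding phi_dg_mult[OF two i2] by (simp only: mult.assoc mult.left_commute mult.commute)
  also have "\<dots> = \<phi> (Em m n c)"
  proof -
    have "(2::'a) * inverse 2 = 1" using two by simp
    then show ?thesis by (simp only: dg_one phi1 mult_1_right)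
  qed
  finally have a: "\<phi> (Em m n (2*c)) = \<phi> (Em m n c)" .
  have e: "Em m n c ** Em m n c = Em m n (2*c)" using Em_mult[OF assms, of c c] by (simp only: mult_2)
  have "\<phi> (Em m n (2*c)) = \<phi> (Em m n c ** Em m n c)" by (simp only: e)
  also have "\<dots> = \<phi> (Em m n c) * \<phi> (Em m n c)" by (rule phim[OF inv_Em[OF assms] inv_Em[OF assms]])
  finally have "\<phi> (Em m n c) * \<phi> (Em m n c) = \<phi> (Em m n c) * 1" using a by simp
  then show ?thesis using phinz[OF inv_Em[OF assms]] by (metis mult_left_cancel)
qed

lemma phi_Sw2: "\<phi> (Sw m n) * \<phi> (Sw m n) = 1"
proof -
  have "Sw m n ** Sw m n = (mat 1 :: 'a^'n^'n)" by (rule Sw_Sw)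
  then show ?thesis using phim[OF inv_Sw inv_Sw, of m n m n] phi1 by simp
qed

lemma phi_dg_move: assumes "a \<noteq> 0" shows "\<phi> (dg a m) = \<phi> (dg a n)"
proof -
  have "\<phi> (dg a n) = \<phi> (Sw m n ** dg a m ** Sw m n)" using Sw_conj by metis
  also have "\<dots> = \<phi> (Sw m n) * \<phi> (dg a m) * \<phi> (Sw m n)"
    using phim[OF invertible_mult[OF inv_Sw inv_dg[OF assms]] inv_Sw] phim[OF inv_Sw inv_dg[OF assms]]
    by simp
  also have "\<dots> = \<phi> (dg a m)" using phi_Sw2[of m n] by (simp add: algebra_simps)
  finally show ?thesis by simp
qed

lemma det_nz_inv: "det (A::'a^'n^'n) \<noteq> 0 \<Longrightarrow> invertible A"
  using invertible_det_nz by blast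

lemma diag_case:
  assumes "\<And>i j. i \<noteq> j \<Longrightarrow> A$i$j = 0" "invertible A"
  shows "\<phi> A = \<phi> (dg (det A) i0)"
proof -
  have gen: "\<forall>A. (\<forall>i j. i \<noteq> j \<longrightarrow> A$i$j = 0) \<longrightarrow> (\<forall>i. i \<notin> K \<longrightarrow> A$i$i = 1) \<longrightarrow> invertible A
      \<longrightarrow> \<phi> A = \<phi> (dg (det A) i0)" for K :: "'n set"
  proof -
    have "finite K" by simp
    then show ?thesis
    proof (induction K rule: finite_induct)
      case empty
      show ?case
      proof (intro allI impI)
        fix A :: "'a^'n^'n"
        assume "\<forall>i j. i \<noteq> j \<longrightarrow> A$i$j = 0" "\<forall>i. i \<notin> {} \<longrightarrow> A$i$i = 1"
        then have "A = mat 1" by (auto simp: vec_eq_iff mat_def)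
        then show "\<phi> A = \<phi> (dg (det A) i0)" by (simp add: dg_one)
      qed
    next
      case (insert k K)
      show ?case
      proof (intro allI impI)
        fix A :: "'a^'n^'n"
        assume d: "\<forall>i j. i \<noteq> j \<longrightarrow> A$i$j = 0" and o: "\<forall>i. i \<notin> insert k K \<longrightarrow> A$i$i = 1"
          and iA: "invertible A"
        define a where "a = A$k$k"
        define A' where "A' = (\<chi> i j. if i = k \<and> j = k then 1 else A$i$j)"
        have d': "\<forall>i j. i \<noteq> j \<longrightarrow> A'$i$j = 0" and o': "\<forall>i. i \<notin> K \<longrightarrow> A'$i$i = 1"
          unfolding A'_def using d o by auto
        have eq: "A = A' ** dg a k"
          unfolding a_def A'_def using d by (auto simp: vec_eq_iff dg_right)
        have dA: "det A = det A' * a" using eq det_mul det_dg by metis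
        have "det A \<noteq> 0" using iA invertible_det_nz by blast
        then have nz: "det A' \<noteq> 0" "a \<noteq> 0" using dA by auto
        have iA': "invertible A'" using det_nz_inv nz by blast
        have "\<phi> A = \<phi> A' * \<phi> (dg a k)" using eq phim[OF iA' inv_dg[OF nz(2)]] by simp
        also have "\<dots> = \<phi> (dg (det A') i0) * \<phi> (dg a i0)"
          using insert.IH d' o' iA' phi_dg_move[OF nz(2)] by metis
        also have "\<dots> = \<phi> (dg (det A) i0)" using phi_dg_mult[OF nz] dA by simp
        finally show "\<phi> A = \<phi> (dg (det A) i0)" .
      qed
    qed
  qed
  show ?thesis using gen[of UNIV] assms by blast
qed

lemma phi_det: assumes "invertible A" shows "\<phi> A = \<phi> (dg (det A) i0)"
proof -
  have "invertible A \<longrightarrow> \<phi> A = \<phi> (dg (det A) i0)"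
  proof (rule induct_matrix_elementary_g[where P = "\<lambda>A. invertible A \<longrightarrow> \<phi> A = \<phi> (dg (det A) i0)"])
    fix A B :: "'a^'n^'n"
    assume PA: "invertible A \<longrightarrow> \<phi> A = \<phi> (dg (det A) i0)" and PB: "invertible B \<longrightarrow> \<phi> B = \<phi> (dg (det B) i0)"
    show "invertible (A ** B) \<longrightarrow> \<phi> (A ** B) = \<phi> (dg (det (A ** B)) i0)"
    proof
      assume "invertible (A ** B)"
      then have "det A * det B \<noteq> 0" using invertible_det_nz det_mul by metis
      then have nz: "det A \<noteq> 0" "det B \<noteq> 0" by auto
      then have i: "invertible A" "invertible B" using det_nz_inv by auto
      have "\<phi> (A ** B) = \<phi> A * \<phi> B" using phim[OF i] .
      also have "\<dots> = \<phi> (dg (det A * det B) i0)" using PA PB i phi_dg_mult[OF nz] by simp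
      finally show "\<phi> (A ** B) = \<phi> (dg (det (A ** B)) i0)" by (simp add: det_mul)
    qed
  next
    fix A :: "'a^'n^'n" and i assume "row i A = 0"
    then have "det A = 0" by (rule det_zero_row(2))
    then show "invertible A \<longrightarrow> \<phi> A = \<phi> (dg (det A) i0)" using invertible_det_nz by blast
  next
    fix A :: "'a^'n^'n" assume "\<And>i j. i \<noteq> j \<Longrightarrow> A$i$j = 0"
    then show "invertible A \<longrightarrow> \<phi> A = \<phi> (dg (det A) i0)" using diag_case by blast
  next
    fix m n :: 'n assume mn: "m \<noteq> n"
    have m1: "(-1::'a) \<noteq> 0" by simp
    have "\<phi> (Sw m n) = \<phi> (Em m n 1 ** Em n m (-1) ** Em m n (1::'a) ** dg (-1) m)"
      by (rule arg_cong[where f=\<phi>, OF Sw_decomp[OF mn]])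
    also have "\<dots> = \<phi> (Em m n 1) * \<phi> (Em n m (-1)) * \<phi> (Em m n (1::'a)) * \<phi> (dg (-1) m)"
      using phim[OF invertible_mult[OF invertible_mult[OF inv_Em[OF mn] inv_Em[OF mn[symmetric]]] inv_Em[OF mn]] inv_dg[OF m1]]
        phim[OF invertible_mult[OF inv_Em[OF mn] inv_Em[OF mn[symmetric]]] inv_Em[OF mn]]
        phim[OF inv_Em[OF mn] inv_Em[OF mn[symmetric]]]
      by simp
    also have "\<dots> = \<phi> (dg (-1) i0)" using phi_Em mn phi_dg_move[OF m1] by simp
    finally show "invertible (Sw m n) \<longrightarrow> \<phi> (Sw m n) = \<phi> (dg (det (Sw m n :: 'a^'n^'n)) i0)"
      using det_Sw[OF mn, where 'a='a] by simp
  next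
    fix m n :: 'n and c :: 'a assume mn: "m \<noteq> n"
    have "\<phi> (Em m n c) = \<phi> (dg (det (Em m n c)) i0)"
      using phi_Em[OF mn] det_Em[OF mn, where 'a='a] by (simp add: dg_one phi1)
    then show "invertible (Em m n c) \<longrightarrow> \<phi> (Em m n c) = \<phi> (dg (det (Em m n c)) i0)"
      by simp
  qed
  then show ?thesis using assms by blast
qed

end

context dval begin

lemma building_split:
  assumes "\<alpha> \<in> building v"
  obtains g g' :: "'a^'n::finite^'n" and s :: "'n \<Rightarrow> real"
  where "g ** g' = mat 1" "g' ** g = mat 1" "\<And>c. \<alpha> (g *v c) = (MIN i. v (c $ i) + ereal (s i))"
proof -
  obtain g :: "'a^'n^'n" and s where g: "invertible g" "\<And>c. \<alpha> (g *v c) = (MIN i. v (c $ i) + ereal (s i))"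
    using assms unfolding building_def by blast
  obtain g' where "g ** g' = mat 1" "g' ** g = mat 1" using g(1) unfolding invertible_def by blast
  then show ?thesis using that g(2) by blast
qed

lemma Min_range_ge: "(x::ereal) \<le> (MIN i::'n::finite. f i) \<longleftrightarrow> (\<forall>i. x \<le> f i)"
  by (simp add: Min_ge_iff)

lemma mv_axis: "((A::'a^'n::finite^'n) *v axis j 1) $ i = A $ i $ j"
proof -
  have "(A *v axis j 1) $ i = (\<Sum>k\<in>UNIV. if k = j then A$i$k else 0)"
    unfolding matrix_vector_mult_def axis_def vec_lambda_beta by (intro sum.cong) auto
  then show ?thesis by (simp only: sum.delta finite UNIV_I if_True)
qed

lemma ereal_sub_le: "(x::ereal) \<noteq> -\<infinity> \<Longrightarrow> ereal b \<le> x + ereal a \<Longrightarrow> ereal (b - a) \<le> x"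
  by (cases x) auto

lemma lie_entries:
  fixes \<alpha> :: "'a^'n::finite \<Rightarrow> ereal" and g g' Y :: "'a^'n^'n"
  assumes gg: "g ** g' = mat 1" and split: "\<And>c. \<alpha> (g *v c) = (MIN i. v (c $ i) + ereal (s i))"
    and Y: "Y \<in> lie_filt \<alpha> t"
  shows "ereal (t + s j - s i) \<le> v ((g' ** Y ** g) $ i $ j)"
proof -
  define Y' where "Y' = g' ** Y ** g"
  define e where "e = (axis j 1 :: 'a^'n)"
  have ae: "\<alpha> (g *v e) = ereal (s j)"
  proof -
    have "(MIN i. v (e $ i) + ereal (s i)) = v (e $ j) + ereal (s j)"
    proof (rule Min_eqI)
      show "finite (range (\<lambda>i. v (e $ i) + ereal (s i)))" by simp
    next
      fix y assume "y \<in> range (\<lambda>i. v (e $ i) + ereal (s i))"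
      then obtain i where "y = v (e $ i) + ereal (s i)" by blast
      then show "v (e $ j) + ereal (s j) \<le> y" unfolding e_def axis_def by (cases "i = j") auto
    qed simp
    then show ?thesis using split unfolding e_def axis_def by simp
  qed
  have "Y *v (g *v e) = g *v (Y' *v e)"
  proof -
    have "g ** Y' = ((g ** g') ** Y) ** g" unfolding Y'_def by (simp only: matrix_mul_assoc)
    then have "g ** Y' = Y ** g" by (simp only: gg matrix_mul_lid)
    then show ?thesis by (simp only: matrix_vector_mul_assoc)
  qed
  moreover have "\<alpha> (g *v e) + ereal t \<le> \<alpha> (Y *v (g *v e))" using Y unfolding lie_filt_def by blast
  ultimately have "\<alpha> (g *v e) + ereal t \<le> \<alpha> (g *v (Y' *v e))" by simp
  then have "ereal (s j) + ereal t \<le> (MIN i. v ((Y' *v e) $ i) + ereal (s i))"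
    using ae split[of "Y' *v e"] by (simp only:)
  then have "ereal (s j) + ereal t \<le> v ((Y' *v e) $ i) + ereal (s i)"
    unfolding Min_range_ge by blast
  then have "ereal (s j + t) \<le> v (Y' $ i $ j) + ereal (s i)" unfolding e_def mv_axis by simp
  then have "ereal (s j + t - s i) \<le> v (Y' $ i $ j)" using ereal_sub_le v_minf by blast
  then show ?thesis unfolding Y'_def by (simp add: algebra_simps)
qed


lemma prod_exp:
  assumes "finite I" "0 \<le> t" "\<And>i. i \<in> I \<Longrightarrow> ereal t \<le> v (y i)"
  shows "ereal (2*t) \<le> v ((\<Prod>i\<in>I. 1 + y i) - 1 - (\<Sum>i\<in>I. y i))"
  using assms(1,3)
proof (induction I rule: finite_induct)
  case empty then show ?case by simp
next
  case (insert a I)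
  define P where "P = (\<Prod>i\<in>I. 1 + y i)"
  define S where "S = (\<Sum>i\<in>I. y i)"
  define E where "E = P - 1 - S"
  have IH: "ereal (2*t) \<le> v E" unfolding E_def P_def S_def using insert by blast
  have vS: "ereal t \<le> v S" unfolding S_def using insert v_sum_ge by blast
  have ya: "ereal t \<le> v (y a)" using insert by blast
  have eq: "(\<Prod>i\<in>insert a I. 1 + y i) - 1 - (\<Sum>i\<in>insert a I. y i) = E + y a * S + y a * E"
  proof -
    have ring: "\<And>P S y::'a. (1+y)*P - 1 - (y + S) = (P - 1 - S) + y*S + y*(P-1-S)"
      by (simp add: algebra_simps)
    show ?thesis unfolding prod.insert[OF insert(1,2)] sum.insert[OF insert(1,2)] E_def P_def S_def
      by (rule ring)
  qed
  have tt: "ereal t + ereal t = ereal (2*t)" by simp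
  have 1: "ereal (2*t) \<le> v (y a * S)"
    using add_mono[OF ya vS] unfolding tt v_mult .
  have "ereal t + ereal (2*t) \<le> v (y a * E)" using add_mono[OF ya IH] unfolding v_mult .
  moreover have "ereal (2*t) \<le> ereal t + ereal (2*t)" using assms(2) by simp
  ultimately have 2: "ereal (2*t) \<le> v (y a * E)" by (rule order_trans[rotated])
  show ?case unfolding eq using IH 1 2 by (intro v_add_ge) auto
qed

lemma v_sign: "v (of_int (sign p) * x) = v x"
  by (cases rule: sign_cases[of p]) auto

lemma det_exp:
  fixes Y :: "'a^'n::finite^'n"
  assumes t: "0 \<le> t" and Y: "\<And>i j. ereal (t + s j - s i) \<le> v (Y $ i $ j)"
  shows "ereal (2*t) \<le> v (det (mat 1 + Y) - 1 - trace Y)"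
proof -
  define M where "M = mat 1 + Y"
  have Me: "M $ i $ j = (if i = j then 1 else 0) + Y $ i $ j" for i j unfolding M_def mat_def by simp
  define PS where "PS = {p. p permutes (UNIV::'n set)}"
  have finPS: "finite PS" unfolding PS_def by (rule finite_permutations) simp
  have idPS: "id \<in> PS" unfolding PS_def by simp
  define f where "f p = of_int (sign p) * (\<Prod>i\<in>UNIV. M $ i $ p i)" for p
  have "det M = sum f PS" unfolding det_def f_def PS_def by simp
  also have "\<dots> = f id + sum f (PS - {id})" using sum.remove[OF finPS idPS] .
  finally have dM: "det M = f id + sum f (PS - {id})" .
  have fid: "f id = (\<Prod>i\<in>UNIV. 1 + Y $ i $ i)" unfolding f_def by (simp add: Me)
  have eq: "det M - 1 - trace Y = ((\<Prod>i\<in>UNIV. 1 + Y $ i $ i) - 1 - (\<Sum>i\<in>UNIV. Y $ i $ i)) + sum f (PS - {id})"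
    unfolding dM fid trace_def by (simp add: algebra_simps)
  have A: "ereal (2*t) \<le> v ((\<Prod>i\<in>UNIV. 1 + Y $ i $ i) - 1 - (\<Sum>i\<in>UNIV. Y $ i $ i))"
    using Y[of i i for i] t by (intro prod_exp) simp_all
  have B: "ereal (2*t) \<le> v (f p)" if p: "p \<in> PS - {id}" for p
  proof -
    have pp: "p permutes UNIV" using p unfolding PS_def by simp
    define c where "c i = (if p i = i then 0 else t + s (p i) - s i)" for i
    have ci: "ereal (c i) \<le> v (M $ i $ p i)" for i
    proof (cases "p i = i")
      case True
      have "0 \<le> v (Y $ i $ i)" using Y[where i=i and j=i] t by (simp add: order_trans[rotated])
      then have "0 \<le> v (1 + Y $ i $ i)" by (intro v_add_ge) simp_all
      then show ?thesis using True unfolding c_def Me by (simp add: zero_ereal_def)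
    next
      case False
      then show ?thesis unfolding c_def Me using Y[where i=i and j="p i"] by simp
    qed
    have vp: "ereal (sum c UNIV) \<le> v (\<Prod>i\<in>UNIV. M $ i $ p i)"
      by (rule v_prod_ge) (use ci in auto)
    have cs: "c i = (if p i = i then 0 else t) + (s (p i) - s i)" for i unfolding c_def by simp
    have "sum c UNIV = (\<Sum>i\<in>UNIV. if p i = i then 0 else t) + ((\<Sum>i\<in>UNIV. s (p i)) - (\<Sum>i\<in>UNIV. s i))"
      unfolding cs by (simp add: sum.distrib sum_subtractf)
    also have "(\<Sum>i\<in>UNIV. s (p i)) = (\<Sum>i\<in>UNIV. s i)"
      using sum.permute[OF pp, of s] by (simp add: comp_def)
    finally have sc: "sum c UNIV = (\<Sum>i\<in>UNIV. if p i = i then 0 else t)" by simp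
    obtain a where a: "p a \<noteq> a" using p by (metis DiffE id_apply ext singletonI)
    have "p (p a) \<noteq> p a" using a permutes_inj[OF pp] by (metis injD)
    then have "2*t = (\<Sum>i\<in>{a, p a}. if p i = i then 0 else t)" using a by simp
    also have "\<dots> \<le> (\<Sum>i\<in>UNIV. if p i = i then 0 else t)"
      by (rule sum_mono2) (use t in auto)
    finally have "ereal (2*t) \<le> ereal (sum c UNIV)" using sc by simp
    also have "\<dots> \<le> v (\<Prod>i\<in>UNIV. M $ i $ p i)" by (rule vp)
    finally show ?thesis unfolding f_def v_sign .
  qed
  have "ereal (2*t) \<le> v (sum f (PS - {id}))" using B finPS by (intro v_sum_ge) auto
  then show ?thesis unfolding M_def[symmetric] eq using A by (intro v_add_ge)
qed

lemma matrix_add_rdistrib': "((A::'a^'n::finite^'n) + B) ** C = A ** C + B ** C"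
  by (simp add: matrix_matrix_mult_def vec_eq_iff sum.distrib distrib_right)

lemma lie_det:
  fixes \<alpha> :: "'a^'n::finite \<Rightarrow> ereal"
  assumes a: "\<alpha> \<in> building v" and Y: "Y \<in> lie_filt \<alpha> t" and t: "0 \<le> t"
  shows "ereal (2*t) \<le> v (det (mat 1 + Y) - 1 - trace Y) \<and> ereal t \<le> v (trace Y)"
proof -
  obtain g g' :: "'a^'n^'n" and s where gg: "g ** g' = mat 1" "g' ** g = mat 1"
    and split: "\<And>c. \<alpha> (g *v c) = (MIN i. v (c $ i) + ereal (s i))"
    using building_split[OF a] by blast
  define Y' where "Y' = g' ** Y ** g"
  have ent: "ereal (t + s j - s i) \<le> v (Y' $ i $ j)" for i j
    unfolding Y'_def using lie_entries[OF gg(1) split Y] .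
  have "mat 1 + Y' = g' ** (mat 1 + Y) ** g"
    unfolding Y'_def by (simp add: matrix_add_ldistrib matrix_add_rdistrib' gg(2))
  then have dd: "det (mat 1 + Y') = det (mat 1 + Y)"
  proof -
    assume e: "mat 1 + Y' = g' ** (mat 1 + Y) ** g"
    have "det g' * det g = 1" using gg(2) det_mul[of g' g] by simp
    then show ?thesis unfolding e det_mul by (simp add: algebra_simps)
  qed
  have "trace Y' = trace (g ** (g' ** Y))" unfolding Y'_def by (rule trace_mul_sym)
  also have "g ** (g' ** Y) = Y" by (simp only: matrix_mul_assoc gg(1) matrix_mul_lid)
  finally have tt: "trace Y' = trace Y" .
  have 1: "ereal (2*t) \<le> v (det (mat 1 + Y) - 1 - trace Y)"
    using det_exp[OF t ent] unfolding dd tt .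
  have di: "ereal t \<le> v (Y' $ i $ i)" for i using ent[of i i] by simp
  have "ereal t \<le> v (trace Y')" unfolding trace_def
    by (rule v_sum_ge) (use di in auto)
  with 1 show ?thesis unfolding tt by simp
qed

lemma scal_in_filt:
  fixes \<alpha> :: "'a^'n::finite \<Rightarrow> ereal"
  assumes a: "\<alpha> \<in> building v" and u: "ereal T \<le> v u" and u1: "1 + u \<noteq> 0"
  shows "\<exists>Z. Z \<in> lie_filt \<alpha> T \<and> invertible (mat 1 + Z) \<and> det (mat 1 + Z) = 1 + u"
proof -
  obtain g g' :: "'a^'n^'n" and s where gg: "g ** g' = mat 1" "g' ** g = mat 1"
    and split: "\<And>c. \<alpha> (g *v c) = (MIN i. v (c $ i) + ereal (s i))"
    using building_split[OF a] by blast
  define i0 :: 'n where "i0 = undefined"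
  define N :: "'a^'n^'n" where "N = (\<chi> p q. if p = q \<and> p = i0 then u else 0)"
  define Z where "Z = g ** N ** g'"
  have N1: "mat 1 + N = dg (1+u) i0" unfolding N_def by (auto simp: vec_eq_iff mat_def dg_entry)
  have Nv: "(N *v c) $ i = (if i = i0 then u * c $ i else 0)" for c i
  proof -
    have "(N *v c) $ i = (\<Sum>k\<in>UNIV. if k = i then (if i = i0 then u * c $ k else 0) else 0)"
      unfolding N_def matrix_vector_mult_def vec_lambda_beta by (intro sum.cong) auto
    then show ?thesis by (simp only: sum.delta finite UNIV_I if_True)
  qed
  have "mat 1 + Z = g ** (mat 1 + N) ** g'"
    unfolding Z_def by (simp add: matrix_add_ldistrib matrix_add_rdistrib' gg(1))
  then have e: "mat 1 + Z = g ** dg (1+u) i0 ** g'" unfolding N1 .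
  have "det g * det g' = 1" using gg(1) det_mul[of g g'] by simp
  then have dZ: "det (mat 1 + Z) = 1 + u" unfolding e det_mul det_dg by (simp add: algebra_simps)
  then have iZ: "invertible (mat 1 + Z)" using u1 invertible_det_nz by metis
  have "Z \<in> lie_filt \<alpha> T" unfolding lie_filt_def
  proof (intro CollectI allI)
    fix w :: "'a^'n"
    define c where "c = g' *v w"
    have w: "w = g *v c" unfolding c_def by (simp only: matrix_vector_mul_assoc gg(1) matrix_vector_mul_lid)
    have Zw: "Z *v w = g *v (N *v c)" unfolding Z_def c_def by (simp only: matrix_vector_mul_assoc matrix_mul_assoc)
    have "(MIN i. v (c $ i) + ereal (s i)) + ereal T \<le> (MIN i. v ((N *v c) $ i) + ereal (s i))"
      unfolding Min_range_ge
    proof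
      fix i
      show "(MIN i. v (c $ i) + ereal (s i)) + ereal T \<le> v ((N *v c) $ i) + ereal (s i)"
      proof (cases "i = i0")
        case True
        have "(MIN i. v (c $ i) + ereal (s i)) \<le> v (c $ i) + ereal (s i)" by (rule Min_le) auto
        then have "(MIN i. v (c $ i) + ereal (s i)) + ereal T \<le> (v (c $ i) + ereal (s i)) + v u"
          using u by (rule add_mono)
        also have "\<dots> = v (u * c $ i) + ereal (s i)" by (simp add: v_mult ac_simps)
        finally show ?thesis unfolding Nv using True by simp
      next
        case False
        then show ?thesis unfolding Nv by simp
      qed
    qed
    then show "\<alpha> w + ereal T \<le> \<alpha> (Z *v w)" unfolding Zw using split[of c] split[of "N *v c"] w by simp
  qed
  then show ?thesis using iZ dZ by blast
qed
end

theorem lemma2p50: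
  fixes v :: "'a::field \<Rightarrow> ereal" and \<psi> :: "'a \<Rightarrow> complex"
    and \<phi> :: "'a^'n::finite^'n \<Rightarrow> complex" and r :: real and \<alpha> :: "'a^'n \<Rightarrow> ereal"
  assumes "nonarch_local_field_odd v"
    and "std_add_char v \<psi>"
    and "CARD('n) \<ge> 2"
    and "quasichar v \<phi>"
    and "has_depth v \<phi> r"
    and "0 < r"
    and "\<alpha> \<in> building v"
  shows "\<exists>l\<in>centre_dual \<inter> dual_depth v (- r). realizes \<psi> \<phi> \<alpha> r l"
proof -
  have dvv: "disc_val v" using assms(1) unfolding nonarch_local_field_odd_def by (rule conjunct1)
  have exS: "\<exists>S. finite S \<and> S \<subseteq> {a. 0 \<le> v a} \<and> (\<forall>a. 0 \<le> v a \<longrightarrow> (\<exists>s\<in>S. 1 \<le> v (a - s)))"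
    using assms(1) unfolding nonarch_local_field_odd_def by (elim conjE)
  have v2: "v (1 + 1) = 0"
    using assms(1) unfolding nonarch_local_field_odd_def by (elim conjE)
  obtain S where S: "finite S" "S \<subseteq> {a. 0 \<le> v a}" "\<forall>a. 0 \<le> v a \<longrightarrow> (\<exists>s\<in>S. 1 \<le> v (a - s))"
    using exS by blast
  have ps1: "\<forall>a b. \<psi> (a + b) = \<psi> a * \<psi> b" and ps3: "\<forall>a. 1 \<le> v a \<longrightarrow> \<psi> a = 1"
    and ps4: "\<exists>a. 0 \<le> v a \<and> \<psi> a \<noteq> 1"
    using assms(2) unfolding std_add_char_def by simp_all
  interpret dval v by (rule dval.intro[OF dvv])
  interpret chsetup v \<psi> S
    by (rule chsetup.intro[OF dval.intro[OF dvv]], rule chsetup_axioms.intro)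
       (use S ps1 ps3 ps4 in auto)
  have q1: "\<forall>g h. invertible g \<and> invertible h \<longrightarrow> \<phi> (g ** h) = \<phi> g * \<phi> h"
    and q2: "\<forall>g. invertible g \<longrightarrow> \<phi> g \<noteq> 0"
    using assms(4) unfolding quasichar_def by simp_all
  have two: "(2::'a) \<noteq> 0"
  proof
    assume "(2::'a) = 0"
    then have "(1::'a) + 1 = 0" by simp
    then show False using v2 by simp
  qed
  interpret qc \<phi> by (rule qc.intro) (use q1 q2 two in auto)
  define i0 :: 'n where "i0 = undefined"
  define f where "f a = \<phi> (dg (1 + a) i0)" for a
  obtain \<alpha>' where a': "\<alpha>' \<in> building v" and triv: "\<And>g. g \<in> grp_filt_plus \<alpha>' r \<Longrightarrow> \<phi> g = 1"
    using assms(5) unfolding has_depth_def by blast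
  define k where "k = \<lfloor>r\<rfloor> + 1"
  define m where "m = \<lfloor>r/2\<rfloor> + 1"
  have kr: "r < real_of_int k" unfolding k_def by linarith
  have m1: "1 \<le> m" unfolding m_def using assms(6) by simp
  have mk: "m \<le> k" unfolding m_def k_def using assms(6) by (simp add: floor_mono)
  have m2k: "k \<le> 2*m"
  proof -
    have h: "real_of_int \<lfloor>r\<rfloor> \<le> r" "r/2 < real_of_int \<lfloor>r/2\<rfloor> + 1" by linarith+
    have "real_of_int \<lfloor>r\<rfloor> < real_of_int (2 * (\<lfloor>r/2\<rfloor> + 1))" using h by (simp; linarith)
    then have "\<lfloor>r\<rfloor> < 2 * (\<lfloor>r/2\<rfloor> + 1)" by (simp only: of_int_less_iff)
    then show ?thesis unfolding k_def m_def by simp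
  qed
  have mr: "r/2 < real_of_int m" unfolding m_def by linarith
  have pos_of_m: "0 < v z" if "ereal (of_int m) \<le> v z" for z
  proof -
    have "(0::ereal) < ereal (of_int m)" using m1 by simp
    then show ?thesis using that by (rule less_le_trans)
  qed
  have mk_e: "ereal (of_int m) \<le> ereal (of_int k)" using mk by simp
  have ftriv: "f u = 1" if u: "ereal (of_int k) \<le> v u" for u
  proof -
    have u1: "1 + u \<noteq> 0" using v_unit_nz pos_of_m order_trans[OF mk_e u] by blast
    obtain Z where Z: "Z \<in> lie_filt \<alpha>' (real_of_int k)" "invertible (mat 1 + Z)" "det (mat 1 + Z) = 1 + u"
      using scal_in_filt[OF a' _ u1, of "real_of_int k"] u by auto
    have "mat 1 + Z \<in> grp_filt_plus \<alpha>' r"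
      unfolding grp_filt_plus_def grp_filt_def using Z(1,2) kr by auto
    then have "\<phi> (mat 1 + Z) = 1" by (rule triv)
    then show ?thesis unfolding f_def using phi_det[OF Z(2), of i0] Z(3) by simp
  qed
  have fadd: "f (a+b) = f a * f b" if a: "ereal (of_int m) \<le> v a" and b: "ereal (of_int m) \<le> v b" for a b
  proof -
    have a1: "1 + a \<noteq> 0" and b1: "1 + b \<noteq> 0" using v_unit_nz pos_of_m a b by blast+
    have ab: "ereal (of_int m) \<le> v (a+b)" using v_add_ge a b by blast
    have ab0: "0 < v (a+b)" using pos_of_m ab by blast
    have ab1: "1 + (a + b) \<noteq> 0" using v_unit_nz ab0 by blast
    define w where "w = a * b / (1 + (a + b))"
    have "v w = v a + v b + - v (1 + (a+b))" unfolding w_def divide_inverse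
      using ab1 by (simp add: v_mult v_inverse)
    then have vw: "v w = v a + v b" using v_unit[OF ab0] by simp
    have "ereal (of_int k) \<le> ereal (of_int m) + ereal (of_int m)" using m2k by simp
    also have "\<dots> \<le> v w" unfolding vw using add_mono[OF a b] .
    finally have kw: "ereal (of_int k) \<le> v w" .
    then have fw: "f w = 1" by (rule ftriv)
    have w1: "1 + w \<noteq> 0" using v_unit_nz pos_of_m order_trans[OF mk_e kw] by blast
    have eq: "(1 + a) * (1 + b) = (1 + (a + b)) * (1 + w)" unfolding w_def using ab1
      by (simp add: field_simps)
    have "f a * f b = \<phi> (dg ((1 + a) * (1 + b)) i0)" unfolding f_def using phi_dg_mult[OF a1 b1] by simp
    also have "\<dots> = \<phi> (dg (1 + (a + b)) i0) * \<phi> (dg (1 + w) i0)" unfolding eq using phi_dg_mult[OF ab1 w1] .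
    also have "\<dots> = f (a + b)" using fw unfolding f_def by simp
    finally show ?thesis by simp
  qed
  obtain \<beta> where vb: "ereal (of_int (1-k)) \<le> v \<beta>" and fb: "\<And>a. ereal (of_int m) \<le> v a \<Longrightarrow> f a = \<psi> (\<beta>*a)"
    using stepC[OF m1 mk, of f] fadd ftriv by blast
  define l where "l = (\<lambda>X::'a^'n^'n. \<beta> * trace X)"
  have lc: "l \<in> centre_dual" unfolding centre_dual_def l_def by blast
  have ld: "l \<in> dual_depth v (- r)" unfolding dual_depth_def
  proof
    show "\<alpha> \<in> building v" by (rule assms(7))
    show "l \<in> dual_filt v \<alpha> (- r)" unfolding dual_filt_def
    proof (intro CollectI ballI)
      fix Y assume "Y \<in> lie_filt_plus \<alpha> (- (- r))"
      then obtain t where t: "r < t" "Y \<in> lie_filt \<alpha> t" unfolding lie_filt_plus_def by auto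
      have "ereal t \<le> v (trace Y)" using lie_det[OF assms(7) t(2)] t(1) assms(6) by simp
      moreover have "ereal r < ereal t" using t(1) by simp
      ultimately have "ereal r < v (trace Y)" by (meson less_le_trans)
      then have "ereal (of_int k) \<le> v (trace Y)" unfolding k_def by (rule v_int_step)
      then have "ereal (of_int (1-k)) + ereal (of_int k) \<le> v \<beta> + v (trace Y)" using vb by (intro add_mono)
      then show "1 \<le> v (l Y)" unfolding l_def by (simp add: v_mult one_ereal_def)
    qed
  qed
  have lr: "realizes \<psi> \<phi> \<alpha> r l" unfolding realizes_def
  proof
    fix Y assume "Y \<in> lie_filt_plus \<alpha> (r / 2)"
    then obtain t where t: "r/2 < t" "Y \<in> lie_filt \<alpha> t" unfolding lie_filt_plus_def by auto
    have t0: "0 \<le> t" using t(1) assms(6) by simp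
    define D where "D = det (mat 1 + Y) - 1 - trace Y"
    have vD: "ereal (2*t) \<le> v D" and vT: "ereal t \<le> v (trace Y)"
      using lie_det[OF assms(7) t(2) t0] unfolding D_def by auto
    have "ereal (r/2) < ereal t" using t(1) by simp
    then have "ereal (r/2) < v (trace Y)" using vT by (rule less_le_trans)
    then have mT: "ereal (of_int m) \<le> v (trace Y)" unfolding m_def by (rule v_int_step)
    have "ereal r < ereal (2*t)" using t(1) by simp
    then have "ereal r < v D" using vD by (rule less_le_trans)
    then have kD: "ereal (of_int k) \<le> v D" unfolding k_def by (rule v_int_step)
    then have mD: "ereal (of_int m) \<le> v D" using mk_e by (rule order_trans[rotated])
    have detY: "det (mat 1 + Y) = 1 + (trace Y + D)" unfolding D_def by simp
    have mTD: "ereal (of_int m) \<le> v (trace Y + D)" using v_add_ge mT mD by blast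
    have "det (mat 1 + Y) \<noteq> 0" unfolding detY using v_unit_nz pos_of_m mTD by blast
    then have iY: "invertible (mat 1 + Y)" using invertible_det_nz by blast
    have "\<phi> (mat 1 + Y) = f (trace Y + D)" unfolding f_def using phi_det[OF iY, of i0] detY by simp
    also have "\<dots> = f (trace Y) * f D" by (rule fadd[OF mT mD])
    also have "\<dots> = \<psi> (\<beta> * trace Y)" using fb[OF mT] ftriv[OF kD] by simp
    finally show "\<phi> (mat 1 + Y) = \<psi> (l Y)" unfolding l_def .
  qed
  show ?thesis using lc ld lr by blast
qed

end
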